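(* Let $D$ be a finite domain and let $\mathcal F$ be a family of functions of the form $f:D^L\to D$. Then there exists a finite family $\Lambda$ of promise relations over $D$ in which every member has the form $(P,P)$ (a CSP) such that $\mathcal F=\operatorname{poly}(\Lambda)$ if and only if $\mathcal F$ is projection-closed, finitizable, a clone, and contains the identity function $\operatorname{id}_D$.
   Context: A promise relation over $D$ is a pair $(P,Q)$ with $P\subseteq Q\subseteq D^k$. $f:D^L\to D$ is a weak polymorphism of $(P,Q)$ if for all $x^{(1)},\dots,x^{(L)}\in P$, $(f(x^{(1)}_1,\dots,x^{(L)}_1),\dots,f(x^{(1)}_k,\dots,x^{(L)}_k))\in Q$; $\operatorname{poly}(\Lambda)$ is the set of functions that are weak polymorphisms of every member of $\Lambda$. For $f:D^L\to D$ and $\pi:[L]\to[R]$, $f^\pi:D^R\to D$ is $f^\pi(y)=f(x)$ with $x_i=y_{\pi(i)}$. $\mathcal F$ is projection-closed if $f^\pi\in\mathcal F$ for all $f\in\mathcal F$ of arity $L$, all $R$, and all $\pi:[L]\to[R]$; finitizable if there is $R\in\mathbb N$ such that for every $L$ and $f:D^L\to D$, $f\in\mathcal F$ iff $f^\pi\in\mathcal F$ for all $\pi:[L]\to[R]$. $\mathcal F$ is a clone if for all $f\in\mathcal F$ of arity $L_1$ and all $g_1,\dots,g_{L_1}\in\mathcal F$ of arity $L_2$, the function $h:D^{L_1L_2}\to D$, $h(x^{(1)},\dots,x^{(L_1)})=f(g_1(x^{(1)}),\dots,g_{L_1}(x^{(L_1)}))$ (with $x^{(j)}\in D^{L_2}$),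 is in $\mathcal F$. $\operatorname{id}_D(x)=x$. *)

theory Defs
  imports "HOL-Library.FuncSet"
begin

text \<open>Tuples in D^n are represented extensionally as functions on {..<n}.
  A function f : D^L -> D is a pair (L, f) with f extensional on D^L.\<close>

definition cube :: "nat \<Rightarrow> (nat \<Rightarrow> 'd) set" where
  "cube n = {..<n} \<rightarrow>\<^sub>E (UNIV :: 'd set)"

definition is_func :: "nat \<Rightarrow> ((nat \<Rightarrow> 'd) \<Rightarrow> 'd) \<Rightarrow> bool" where
  "is_func L f \<longleftrightarrow> f \<in> cube L \<rightarrow>\<^sub>E (UNIV :: 'd set)"

definition minor :: "nat \<Rightarrow> ((nat \<Rightarrow> 'd) \<Rightarrow> 'd) \<Rightarrow> nat \<Rightarrow> (nat \<Rightarrow> nat) \<Rightarrow> ((nat \<Rightarrow> 'd) \<Rightarrow> 'd)" where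
  "minor L f R \<pi> = (\<lambda>y \<in> cube R. f (\<lambda>i \<in> {..<L}. y (\<pi> i)))"

definition proj_closed :: "(nat \<times> ((nat \<Rightarrow> 'd) \<Rightarrow> 'd)) set \<Rightarrow> bool" where
  "proj_closed F \<longleftrightarrow> (\<forall>(L, f) \<in> F. \<forall>R \<ge> 1. \<forall>\<pi> \<in> {..<L} \<rightarrow> {..<R}. (R, minor L f R \<pi>) \<in> F)"

definition finitizable :: "(nat \<times> ((nat \<Rightarrow> 'd) \<Rightarrow> 'd)) set \<Rightarrow> bool" where
  "finitizable F \<longleftrightarrow> (\<exists>R::nat. \<forall>L \<ge> 1. \<forall>f. is_func L f \<longrightarrow>
      ((L, f) \<in> F \<longleftrightarrow> (\<forall>\<pi> \<in> {..<L} \<rightarrow> {..<R}. (R, minor L f R \<pi>) \<in> F)))"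

text \<open>h(x^(1),...,x^(L1)) = f(g_1(x^(1)),...,g_L1(x^(L1))), block j of x is x(j*L2+i), i<L2.\<close>
definition compose :: "nat \<Rightarrow> ((nat \<Rightarrow> 'd) \<Rightarrow> 'd) \<Rightarrow> nat \<Rightarrow> (nat \<Rightarrow> (nat \<Rightarrow> 'd) \<Rightarrow> 'd) \<Rightarrow> ((nat \<Rightarrow> 'd) \<Rightarrow> 'd)" where
  "compose L1 f L2 g = (\<lambda>x \<in> cube (L1 * L2).
      f (\<lambda>j \<in> {..<L1}. g j (\<lambda>i \<in> {..<L2}. x (j * L2 + i))))"

definition is_clone :: "(nat \<times> ((nat \<Rightarrow> 'd) \<Rightarrow> 'd)) set \<Rightarrow> bool" where
  "is_clone F \<longleftrightarrow> (\<forall>(L1, f) \<in> F. \<forall>L2 g. (\<forall>j < L1. (L2, g j) \<in> F) \<longrightarrow> (L1 * L2, compose L1 f L2 g) \<in> F)"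

definition id_D :: "(nat \<Rightarrow> 'd) \<Rightarrow> 'd" where
  "id_D = (\<lambda>x \<in> cube 1. x 0)"

definition promise_rel :: "nat \<Rightarrow> (nat \<Rightarrow> 'd) set \<Rightarrow> (nat \<Rightarrow> 'd) set \<Rightarrow> bool" where
  "promise_rel k P Q \<longleftrightarrow> P \<subseteq> Q \<and> Q \<subseteq> cube k"

definition weak_poly :: "nat \<Rightarrow> (nat \<Rightarrow> 'd) set \<Rightarrow> (nat \<Rightarrow> 'd) set \<Rightarrow> nat \<Rightarrow> ((nat \<Rightarrow> 'd) \<Rightarrow> 'd) \<Rightarrow> bool" where
  "weak_poly k P Q L f \<longleftrightarrow>
     (\<forall>xs \<in> {..<L} \<rightarrow> P. (\<lambda>i \<in> {..<k}. f (\<lambda>l \<in> {..<L}. xs l i)) \<in> Q)"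

definition poly :: "(nat \<times> (nat \<Rightarrow> 'd) set \<times> (nat \<Rightarrow> 'd) set) set \<Rightarrow> (nat \<times> ((nat \<Rightarrow> 'd) \<Rightarrow> 'd)) set" where
  "poly \<Lambda> = {(L, f). L \<ge> 1 \<and> is_func L f \<and> (\<forall>(k, P, Q) \<in> \<Lambda>. weak_poly k P Q L f)}"

end

theory Submission
  imports Defs
begin

lemma finite_cube: "finite (cube n :: (nat \<Rightarrow> 'd::finite) set)"
  by (simp add: cube_def finite_PiE)

lemma restrict_in_cube[simp]: "(\<lambda>i\<in>{..<n}. h i) \<in> cube n"
  by (simp add: cube_def)

lemma cube_restrict: "x \<in> cube n \<Longrightarrow> (\<lambda>i\<in>{..<n}. x i) = x"
  unfolding cube_def by (metis PiE_restrict restrict_ext)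

definition csp_ok :: "(nat \<times> (nat \<Rightarrow> 'd) set \<times> (nat \<Rightarrow> 'd) set) set \<Rightarrow> bool" where
  "csp_ok \<Lambda> \<longleftrightarrow> (\<forall>(k, P, Q) \<in> \<Lambda>. promise_rel k P Q \<and> P = Q)"

lemma poly_id:
  assumes "csp_ok \<Lambda>"
  shows "(1, id_D) \<in> poly \<Lambda>"
proof -
  have "weak_poly k P Q 1 id_D" if "(k,P,Q) \<in> \<Lambda>" for k P Q
  proof -
    from assms that have PQ: "P = Q" "P \<subseteq> cube k" by (auto simp: csp_ok_def promise_rel_def)
    show ?thesis unfolding weak_poly_def
    proof
      fix xs assume xs: "xs \<in> {..<1::nat} \<rightarrow> P"
      hence x0: "xs 0 \<in> P" by auto
      have "(\<lambda>i\<in>{..<k}. id_D (\<lambda>l\<in>{..<1}. xs l i)) = (\<lambda>i\<in>{..<k}. xs 0 i)"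
        by (simp add: id_D_def)
      also have "\<dots> = xs 0" using x0 PQ cube_restrict by blast
      finally show "(\<lambda>i\<in>{..<k}. id_D (\<lambda>l\<in>{..<1}. xs l i)) \<in> Q" using x0 PQ by simp
    qed
  qed
  moreover have "is_func 1 (id_D :: (nat \<Rightarrow> 'a) \<Rightarrow> 'a)" by (simp add: is_func_def id_D_def)
  ultimately show ?thesis by (auto simp: poly_def)
qed

lemma poly_minor:
  assumes "(L, f) \<in> poly \<Lambda>" "R \<ge> 1" "\<pi> \<in> {..<L} \<rightarrow> {..<R}"
  shows "(R, minor L f R \<pi>) \<in> poly \<Lambda>"
proof -
  have "weak_poly k P Q R (minor L f R \<pi>)" if kP: "(k,P,Q) \<in> \<Lambda>" for k P Q
    unfolding weak_poly_def
  proof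
    fix xs assume xs: "xs \<in> {..<R} \<rightarrow> P"
    have "(\<lambda>l. xs (\<pi> l)) \<in> {..<L} \<rightarrow> P" using xs assms(3) by auto
    with assms(1) kP have *: "(\<lambda>i\<in>{..<k}. f (\<lambda>l\<in>{..<L}. xs (\<pi> l) i)) \<in> Q"
      by (auto simp: poly_def weak_poly_def)
    have "(\<lambda>i\<in>{..<k}. minor L f R \<pi> (\<lambda>l\<in>{..<R}. xs l i)) = (\<lambda>i\<in>{..<k}. f (\<lambda>l\<in>{..<L}. xs (\<pi> l) i))"
    proof (rule restrict_ext)
      fix i assume "i \<in> {..<k}"
      have "(\<lambda>i'\<in>{..<L}. (\<lambda>l\<in>{..<R}. xs l i) (\<pi> i')) = (\<lambda>i'\<in>{..<L}. xs (\<pi> i') i)"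
        using assms(3) by (intro restrict_ext) auto
      then show "minor L f R \<pi> (\<lambda>l\<in>{..<R}. xs l i) = f (\<lambda>l\<in>{..<L}. xs (\<pi> l) i)"
        by (simp add: minor_def)
    qed
    with * show "(\<lambda>i\<in>{..<k}. minor L f R \<pi> (\<lambda>l\<in>{..<R}. xs l i)) \<in> Q" by simp
  qed
  moreover have "is_func R (minor L f R \<pi>)" by (simp add: is_func_def minor_def)
  ultimately show ?thesis using assms(2) by (auto simp: poly_def)
qed

lemma idx_lt: "j < (L1::nat) \<Longrightarrow> l < L2 \<Longrightarrow> j * L2 + l < L1 * L2"
proof -
  assume "j < L1" "l < L2"
  hence "j * L2 + l < j * L2 + L2" by simp
  also have "\<dots> = Suc j * L2" by simp
  also have "\<dots> \<le> L1 * L2" using \<open>j < L1\<close> by (intro mult_right_mono) auto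
  finally show ?thesis .
qed

lemma poly_compose:
  assumes f: "(L1, f) \<in> poly \<Lambda>" and g: "\<forall>j < L1. (L2, g j) \<in> poly \<Lambda>"
    and ok: "csp_ok \<Lambda>"
  shows "(L1 * L2, compose L1 f L2 g) \<in> poly \<Lambda>"
proof -
  from f have L1: "L1 \<ge> 1" by (auto simp: poly_def)
  with g have "(L2, g 0) \<in> poly \<Lambda>" by auto
  hence L2: "L2 \<ge> 1" by (auto simp: poly_def)
  have "weak_poly k P Q (L1*L2) (compose L1 f L2 g)" if kP0: "(k,P,Q) \<in> \<Lambda>" for k P Q
    unfolding weak_poly_def
  proof -
    have kP: "(k,P,Q) \<in> \<Lambda>" "P = Q" using kP0 ok by (auto simp: csp_ok_def)
    show "\<forall>xs\<in>{..<L1 * L2} \<rightarrow> P. (\<lambda>i\<in>{..<k}. compose L1 f L2 g (\<lambda>l\<in>{..<L1 * L2}. xs l i)) \<in> Q"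
  proof
    fix xs assume xs: "xs \<in> {..<L1*L2} \<rightarrow> P"
    define ys where "ys j = (\<lambda>i\<in>{..<k}. g j (\<lambda>l\<in>{..<L2}. xs (j*L2+l) i))" for j
    have "ys j \<in> P" if "j < L1" for j
    proof -
      have "(\<lambda>l. xs (j*L2+l)) \<in> {..<L2} \<rightarrow> P" using xs idx_lt[OF that] by auto
      moreover have "(L2, g j) \<in> poly \<Lambda>" using g that by auto
      ultimately show ?thesis using kP unfolding ys_def poly_def weak_poly_def by fastforce
    qed
    hence "ys \<in> {..<L1} \<rightarrow> P" by auto
    with f kP have *: "(\<lambda>i\<in>{..<k}. f (\<lambda>j\<in>{..<L1}. ys j i)) \<in> Q"
      by (auto simp: poly_def weak_poly_def)
    have "(\<lambda>i\<in>{..<k}. compose L1 f L2 g (\<lambda>m\<in>{..<L1*L2}. xs m i)) = (\<lambda>i\<in>{..<k}. f (\<lambda>j\<in>{..<L1}. ys j i))"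
    proof (rule restrict_ext)
      fix i assume i: "i \<in> {..<k}"
      have "(\<lambda>j\<in>{..<L1}. g j (\<lambda>l\<in>{..<L2}. (\<lambda>m\<in>{..<L1*L2}. xs m i) (j * L2 + l)))
          = (\<lambda>j\<in>{..<L1}. ys j i)"
      proof (rule restrict_ext)
        fix j assume j: "j \<in> {..<L1}"
        have "(\<lambda>l\<in>{..<L2}. (\<lambda>m\<in>{..<L1*L2}. xs m i) (j * L2 + l)) = (\<lambda>l\<in>{..<L2}. xs (j*L2+l) i)"
          using idx_lt j by (intro restrict_ext) auto
        then show "g j (\<lambda>l\<in>{..<L2}. (\<lambda>m\<in>{..<L1*L2}. xs m i) (j * L2 + l)) = ys j i"
          using i by (simp add: ys_def)
      qed
      then show "compose L1 f L2 g (\<lambda>m\<in>{..<L1*L2}. xs m i) = f (\<lambda>j\<in>{..<L1}. ys j i)"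
        by (simp add: compose_def)
    qed
    with * show "(\<lambda>i\<in>{..<k}. compose L1 f L2 g (\<lambda>m\<in>{..<L1*L2}. xs m i)) \<in> Q" by simp
  qed
  qed
  moreover have "is_func (L1*L2) (compose L1 f L2 g)" by (simp add: is_func_def compose_def)
  moreover have "L1 * L2 \<ge> 1" using L1 L2 by simp
  ultimately show ?thesis using assms(2) by (auto simp: poly_def)
qed


lemma poly_finitizable:
  fixes \<Lambda> :: "(nat \<times> (nat \<Rightarrow> 'd::finite) set \<times> (nat \<Rightarrow> 'd) set) set"
  assumes fin: "finite \<Lambda>" and ok: "csp_ok \<Lambda>"
  shows "finitizable (poly \<Lambda>)"
proof -
  define R where "R = Max (insert 1 ((\<lambda>(k,P,Q). card P) ` \<Lambda>))"
  have finS: "finite (insert 1 ((\<lambda>(k,P,Q). card P) ` \<Lambda>))" using fin by simp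
  have R1: "R \<ge> 1" unfolding R_def using finS by (simp add: Max_ge)
  have cardR: "card P \<le> R" if "(k,P,Q) \<in> \<Lambda>" for k P Q
    unfolding R_def using finS that by (intro Max_ge) force+
  have "(L, f) \<in> poly \<Lambda> \<longleftrightarrow> (\<forall>\<pi> \<in> {..<L} \<rightarrow> {..<R}. (R, minor L f R \<pi>) \<in> poly \<Lambda>)"
    if L: "L \<ge> 1" and isf: "is_func L f" for L f
  proof
    assume "(L, f) \<in> poly \<Lambda>"
    then show "\<forall>\<pi> \<in> {..<L} \<rightarrow> {..<R}. (R, minor L f R \<pi>) \<in> poly \<Lambda>"
      using poly_minor R1 by blast
  next
    assume mn: "\<forall>\<pi> \<in> {..<L} \<rightarrow> {..<R}. (R, minor L f R \<pi>) \<in> poly \<Lambda>"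
    have "weak_poly k P Q L f" if kP0: "(k,P,Q) \<in> \<Lambda>" for k P Q
      unfolding weak_poly_def
    proof
      fix xs assume xs: "xs \<in> {..<L} \<rightarrow> P"
      have PQ: "P = Q" "P \<subseteq> cube k" using kP0 ok by (auto simp: csp_ok_def promise_rel_def)
      have finP: "finite P" using PQ finite_cube finite_subset by blast
      have x0: "xs 0 \<in> P" using xs L by auto
      hence cP: "card P > 0" using finP card_gt_0_iff by blast
      obtain e where e: "bij_betw e {0..<card P} P" using ex_bij_betw_nat_finite[OF finP] by blast
      define ys where "ys c = e (if c < card P then c else 0)" for c
      have ys: "ys \<in> {..<R} \<rightarrow> P" using e cP unfolding ys_def bij_betw_def by auto
      define \<pi> where "\<pi> l = inv_into {0..<card P} e (xs l)" for l
      have surj: "e ` {0..<card P} = P" using e bij_betw_imp_surj_on by blast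
      have pil: "\<pi> l < card P" "e (\<pi> l) = xs l" if "l < L" for l
      proof -
        have "xs l \<in> e ` {0..<card P}" using xs that surj by auto
        then show "\<pi> l < card P" "e (\<pi> l) = xs l" unfolding \<pi>_def
          using inv_into_into[of "xs l" e "{0..<card P}"] f_inv_into_f[of "xs l" e "{0..<card P}"] by auto
      qed
      have piR: "\<pi> \<in> {..<L} \<rightarrow> {..<R}" using pil cardR[OF kP0] by fastforce
      have "(R, minor L f R \<pi>) \<in> poly \<Lambda>" using mn piR by blast
      with kP0 ys have *: "(\<lambda>i\<in>{..<k}. minor L f R \<pi> (\<lambda>c\<in>{..<R}. ys c i)) \<in> Q"
        by (auto simp: poly_def weak_poly_def)
      have "(\<lambda>i\<in>{..<k}. minor L f R \<pi> (\<lambda>c\<in>{..<R}. ys c i)) = (\<lambda>i\<in>{..<k}. f (\<lambda>l\<in>{..<L}. xs l i))"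
      proof (rule restrict_ext)
        fix i assume "i \<in> {..<k}"
        have "(\<lambda>l\<in>{..<L}. (\<lambda>c\<in>{..<R}. ys c i) (\<pi> l)) = (\<lambda>l\<in>{..<L}. xs l i)"
        proof (rule restrict_ext)
          fix l assume l: "l \<in> {..<L}"
          then have "\<pi> l < R" using piR by auto
          then show "(\<lambda>c\<in>{..<R}. ys c i) (\<pi> l) = xs l i" using pil l by (auto simp: ys_def)
        qed
        then show "minor L f R \<pi> (\<lambda>c\<in>{..<R}. ys c i) = f (\<lambda>l\<in>{..<L}. xs l i)"
          by (simp add: minor_def)
      qed
      with * show "(\<lambda>i\<in>{..<k}. f (\<lambda>l\<in>{..<L}. xs l i)) \<in> Q" by simp
    qed
    then show "(L, f) \<in> poly \<Lambda>" using L isf by (auto simp: poly_def)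
  qed
  then show ?thesis unfolding finitizable_def by blast
qed


lemma proj_fun:
  assumes "j < R" "y \<in> cube R"
  shows "minor 1 id_D R (\<lambda>_. j) y = y j"
  using assms by (simp add: minor_def id_D_def)

lemma converse_dir:
  fixes F :: "(nat \<times> ((nat \<Rightarrow> 'd::finite) \<Rightarrow> 'd)) set"
  assumes A: "\<forall>(L, f) \<in> F. L \<ge> 1 \<and> is_func L f"
    and pc: "proj_closed F" and fz: "finitizable F" and cl: "is_clone F" and idF: "(1, id_D) \<in> F"
  shows "\<exists>\<Lambda>. finite \<Lambda> \<and> (\<forall>(k, P, Q) \<in> \<Lambda>. promise_rel k P Q \<and> P = Q) \<and> F = poly \<Lambda>"
proof -
  obtain R where R: "\<forall>L \<ge> 1. \<forall>f. is_func L f \<longrightarrow>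
      ((L, f) \<in> F \<longleftrightarrow> (\<forall>\<pi> \<in> {..<L} \<rightarrow> {..<R}. (R, minor L f R \<pi>) \<in> F))"
    using fz unfolding finitizable_def by blast
  define k where "k = card (cube R :: (nat \<Rightarrow> 'd) set)"
  obtain c :: "nat \<Rightarrow> (nat \<Rightarrow> 'd)" where c0: "bij_betw c {0..<k} (cube R)"
    using ex_bij_betw_nat_finite[OF finite_cube] unfolding k_def by blast
  have c: "bij_betw c {..<k} (cube R)" using c0 by (simp add: atLeast0LessThan)
  have cin: "c i \<in> cube R" if "i < k" for i using c that unfolding bij_betw_def by auto
  have csurj: "\<exists>i<k. y = c i" if "y \<in> cube R" for y
    using c that unfolding bij_betw_def by auto
  define P where "P = {(\<lambda>i\<in>{..<k}. g (c i)) | g. (R, g) \<in> F}"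
  define \<Lambda> where "\<Lambda> = {(k, P, P)}"
  have ok: "\<forall>(k, P, Q) \<in> \<Lambda>. promise_rel k P Q \<and> P = Q"
    unfolding \<Lambda>_def promise_rel_def P_def by auto
  have "F = poly \<Lambda>"
  proof (intro set_eqI iffI)
    fix Lf assume LfF: "Lf \<in> F"
    obtain L f where Lf: "Lf = (L, f)" by fastforce
    with LfF A have L: "L \<ge> 1" "is_func L f" by auto
    have "weak_poly k P P L f" unfolding weak_poly_def
    proof
      fix xs assume xs: "xs \<in> {..<L} \<rightarrow> P"
      have "\<forall>l<L. \<exists>g. (R, g) \<in> F \<and> xs l = (\<lambda>i\<in>{..<k}. g (c i))"
        using xs unfolding P_def by blast
      then obtain G where G: "\<And>l. l < L \<Longrightarrow> (R, G l) \<in> F \<and> xs l = (\<lambda>i\<in>{..<k}. G l (c i))"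
        by metis
      have "(R, G 0) \<in> F" using G L by auto
      hence R1: "R \<ge> 1" using A by auto
      have comp: "(L * R, compose L f R G) \<in> F"
        using cl LfF Lf G unfolding is_clone_def by auto
      define \<pi> where "\<pi> m = m mod R" for m
      have piR: "\<pi> \<in> {..<L*R} \<rightarrow> {..<R}" using R1 by (auto simp: \<pi>_def)
      define h where "h = minor (L*R) (compose L f R G) R \<pi>"
      have hF: "(R, h) \<in> F" using pc comp R1 piR unfolding proj_closed_def h_def by auto
      have "(\<lambda>i\<in>{..<k}. f (\<lambda>l\<in>{..<L}. xs l i)) = (\<lambda>i\<in>{..<k}. h (c i))"
      proof (rule restrict_ext)
        fix i assume i: "i \<in> {..<k}"
        have ci: "c i \<in> cube R" using cin i by auto
        have "(\<lambda>j\<in>{..<L}. G j (\<lambda>l\<in>{..<R}. (\<lambda>m\<in>{..<L*R}. c i (\<pi> m)) (j * R + l)))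
            = (\<lambda>j\<in>{..<L}. xs j i)"
        proof (rule restrict_ext)
          fix j assume j: "j \<in> {..<L}"
          have "(\<lambda>l\<in>{..<R}. (\<lambda>m\<in>{..<L*R}. c i (\<pi> m)) (j * R + l)) = (\<lambda>l\<in>{..<R}. c i l)"
            using idx_lt j by (intro restrict_ext) (auto simp: \<pi>_def)
          also have "\<dots> = c i" using cube_restrict ci by blast
          finally show "G j (\<lambda>l\<in>{..<R}. (\<lambda>m\<in>{..<L*R}. c i (\<pi> m)) (j * R + l)) = xs j i"
            using G j i by auto
        qed
        then show "f (\<lambda>l\<in>{..<L}. xs l i) = h (c i)"
          by (simp add: h_def minor_def compose_def ci)
      qed
      moreover have "(\<lambda>i\<in>{..<k}. h (c i)) \<in> P" using hF unfolding P_def by blast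
      ultimately show "(\<lambda>i\<in>{..<k}. f (\<lambda>l\<in>{..<L}. xs l i)) \<in> P" by simp
    qed
    then show "Lf \<in> poly \<Lambda>" using L Lf by (simp add: poly_def \<Lambda>_def)
  next
    fix Lf assume LfP: "Lf \<in> poly \<Lambda>"
    obtain L f where Lf: "Lf = (L, f)" by fastforce
    with LfP have L: "L \<ge> 1" "is_func L f" and wp: "weak_poly k P P L f"
      by (auto simp: poly_def \<Lambda>_def)
    have "\<forall>\<pi> \<in> {..<L} \<rightarrow> {..<R}. (R, minor L f R \<pi>) \<in> F"
    proof
      fix \<pi> assume piR: "\<pi> \<in> {..<L} \<rightarrow> {..<R}"
      have "\<pi> 0 < R" using piR L by auto
      hence R1: "R \<ge> 1" by simp
      define xs where "xs l = (\<lambda>i\<in>{..<k}. minor 1 id_D R (\<lambda>_. \<pi> l) (c i))" for l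
      have "xs l \<in> P" if "l < L" for l
      proof -
        have "(\<lambda>_. \<pi> l) \<in> {..<1} \<rightarrow> {..<R}" using piR that by auto
        then have "(R, minor 1 id_D R (\<lambda>_. \<pi> l)) \<in> F"
          using pc idF R1 unfolding proj_closed_def by fastforce
        then show ?thesis unfolding xs_def P_def by blast
      qed
      hence "xs \<in> {..<L} \<rightarrow> P" by auto
      with wp have "(\<lambda>i\<in>{..<k}. f (\<lambda>l\<in>{..<L}. xs l i)) \<in> P" unfolding weak_poly_def by blast
      then obtain h where hF: "(R, h) \<in> F" and hT: "(\<lambda>i\<in>{..<k}. f (\<lambda>l\<in>{..<L}. xs l i)) = (\<lambda>i\<in>{..<k}. h (c i))"
        unfolding P_def by blast
      have hfun: "is_func R h" using hF A by auto
      have "h = minor L f R \<pi>"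
      proof
        fix y
        show "h y = minor L f R \<pi> y"
        proof (cases "y \<in> cube R")
          case True
          then obtain i where i: "i < k" "y = c i" using csurj by blast
          have "h (c i) = f (\<lambda>l\<in>{..<L}. xs l i)" using i fun_cong[OF hT, of i] by (simp add: lessThan_iff)
          also have "(\<lambda>l\<in>{..<L}. xs l i) = (\<lambda>l\<in>{..<L}. c i (\<pi> l))"
          proof (rule restrict_ext)
            fix l assume l: "l \<in> {..<L}"
            then have "\<pi> l < R" using piR by auto
            then show "xs l i = c i (\<pi> l)"
              using proj_fun[OF \<open>\<pi> l < R\<close> cin[OF i(1)]] i(1) by (simp add: xs_def)
          qed
          finally have 1: "h (c i) = f (\<lambda>l\<in>{..<L}. c i (\<pi> l))" .
          have 2: "minor L f R \<pi> (c i) = f (\<lambda>l\<in>{..<L}. c i (\<pi> l))"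
            unfolding minor_def using cin[OF i(1)] by (simp only: restrict_apply')
          show ?thesis using 1 2 i(2) by (simp only:)
        next
          case False
          then show ?thesis using hfun by (simp add: is_func_def minor_def PiE_def extensional_def)
        qed
      qed
      then show "(R, minor L f R \<pi>) \<in> F" using hF by simp
    qed
    then show "Lf \<in> F" using R L Lf by blast
  qed
  moreover have "finite \<Lambda>" unfolding \<Lambda>_def by simp
  ultimately show ?thesis using ok by blast
qed

theorem lemmaE4:
  fixes F :: "(nat \<times> ((nat \<Rightarrow> 'd::finite) \<Rightarrow> 'd)) set"
  assumes "\<forall>(L, f) \<in> F. L \<ge> 1 \<and> is_func L f"
  shows "(\<exists>\<Lambda>. finite \<Lambda> \<and> (\<forall>(k, P, Q) \<in> \<Lambda>. promise_rel k P Q \<and> P = Q) \<and> F = poly \<Lambda>)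
         \<longleftrightarrow> proj_closed F \<and> finitizable F \<and> is_clone F \<and> (1, id_D) \<in> F"
proof
  assume "\<exists>\<Lambda>. finite \<Lambda> \<and> (\<forall>(k, P, Q) \<in> \<Lambda>. promise_rel k P Q \<and> P = Q) \<and> F = poly \<Lambda>"
  then obtain \<Lambda> where fin: "finite \<Lambda>" and ok: "csp_ok \<Lambda>" and FL: "F = poly \<Lambda>"
    unfolding csp_ok_def by blast
  have "proj_closed F" unfolding proj_closed_def FL using poly_minor by blast
  moreover have "finitizable F" using poly_finitizable[OF fin ok] FL by simp
  moreover have "is_clone F" unfolding is_clone_def FL using poly_compose ok by blast
  moreover have "(1, id_D) \<in> F" using poly_id[OF ok] FL by simp
  ultimately show "proj_closed F \<and> finitizable F \<and> is_clone F \<and> (1, id_D) \<in> F" by blast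
next
  assume "proj_closed F \<and> finitizable F \<and> is_clone F \<and> (1, id_D) \<in> F"
  then show "\<exists>\<Lambda>. finite \<Lambda> \<and> (\<forall>(k, P, Q) \<in> \<Lambda>. promise_rel k P Q \<and> P = Q) \<and> F = poly \<Lambda>"
    using converse_dir[OF assms] by blast
qed

end
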